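(* Let $A^\star\in\mathbb{R}^{n\times n}$, $B^\star\in\mathbb{R}^{n\times m}$, $C^\star\in\mathbb{R}^{p\times n}$ with $(A^\star,C^\star)$ observable with observability index $\ell^\star$, let data be generated as in the context and assume $\Delta_{10}\Delta_{10}^\top\preceq\Theta$. Then: $\Psi_0\Psi_0^\top\succ\Theta_{22}$ implies $\operatorname{rank}S_0=(p+m)\ell^\star$; $\operatorname{rank}S_0=(p+m)\ell^\star$ implies $\operatorname{rank}\mathcal{O}_{\ell^\star}=p\ell^\star$; and $\operatorname{rank}\mathcal{O}_{\ell^\star}=p\ell^\star$ implies $p\ell^\star=n$.
   Context: Let $\ell=\ell^\star$; $\mathcal{O}_\ell=[C^\star;C^\star A^\star;\dots;C^\star{A^\star}^{\ell-1}]\in\mathbb{R}^{p\ell\times n}$. Data: for $k=0,\dots,T$ ($T\ge\ell$), $x(k+1)=A^\star x(k)+B^\star u(k)$, $y(k)=C^\star x(k)$ from some $x(0)$; $u^{\mathrm m}=u+d^u$, $y^{\mathrm m}=y+d^y$. Matrices with columns $j=0,\dots,T-\ell$: column $j$ of $\Psi_0$ is $(y^{\mathrm m}(j),\dots,y^{\mathrm m}(j+\ell-1),u^{\mathrm m}(j),\dots,u^{\mathrm m}(j+\ell-1))$; of $S_0$ is $(y(j),\dots,y(j+\ell-1),u(j),\dots,u(j+\ell-1))$ (noise-free data); of $\Delta_{10}$ is $(d^y(j+\ell),d^y(j),\dots,d^y(j+\ell-1),d^u(j),\dots,d^u(j+\ell-1))$. $\Theta=\Theta^\top\succeq0$ of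 size $p+p\ell+m\ell$ is given, partitioned as $\begin{bmatrix}\Theta_{11}&\Theta_{12}\\\Theta_{12}^\top&\Theta_{22}\end{bmatrix}$ with $\Theta_{11}\in\mathbb{R}^{p\times p}$. *)

theory Defs
  imports "Jordan_Normal_Form.DL_Rank"
begin

definition mrank :: "real mat \<Rightarrow> nat" where
  "mrank M = vec_space.rank (dim_row M) M"

definition psd :: "real mat \<Rightarrow> bool" where
  "psd M \<longleftrightarrow> dim_row M = dim_col M \<and>
     (\<forall>v \<in> carrier_vec (dim_row M). v \<bullet> (M *\<^sub>v v) \<ge> 0)"

definition pd :: "real mat \<Rightarrow> bool" where
  "pd M \<longleftrightarrow> dim_row M = dim_col M \<and>
     (\<forall>v \<in> carrier_vec (dim_row M). v \<noteq> 0\<^sub>v (dim_row M) \<longrightarrow> v \<bullet> (M *\<^sub>v v) > 0)"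

definition loewner_le :: "real mat \<Rightarrow> real mat \<Rightarrow> bool" where
  "loewner_le X Y \<longleftrightarrow> dim_row X = dim_row Y \<and> dim_col X = dim_col Y \<and> psd (Y - X)"

definition loewner_gt :: "real mat \<Rightarrow> real mat \<Rightarrow> bool" where
  "loewner_gt X Y \<longleftrightarrow> dim_row X = dim_row Y \<and> dim_col X = dim_col Y \<and> pd (X - Y)"

(* observability matrix O_l = [C; C A; ...; C A^(l-1)], size (p*l) x n *)
definition obs_mat :: "real mat \<Rightarrow> real mat \<Rightarrow> nat \<Rightarrow> real mat" where
  "obs_mat A C l = mat (dim_row C * l) (dim_col A)
     (\<lambda>(i, j). (C * (A ^\<^sub>m (i div dim_row C))) $$ (i mod dim_row C, j))"

definition observable :: "real mat \<Rightarrow> real mat \<Rightarrow> bool" where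
  "observable A C \<longleftrightarrow> mrank (obs_mat A C (dim_row A)) = dim_row A"

definition obs_index :: "real mat \<Rightarrow> real mat \<Rightarrow> nat" where
  "obs_index A C = (LEAST l. mrank (obs_mat A C l) = dim_row A)"

(* Hankel-type data matrix with columns j = 0..T-l:
   (y(j),...,y(j+l-1), u(j),...,u(j+l-1)), y in R^p, u in R^m *)
definition data_mat :: "nat \<Rightarrow> nat \<Rightarrow> nat \<Rightarrow> nat \<Rightarrow> (nat \<Rightarrow> real vec) \<Rightarrow> (nat \<Rightarrow> real vec) \<Rightarrow> real mat" where
  "data_mat p m l T y u = mat (p * l + m * l) (T - l + 1)
     (\<lambda>(i, j). if i < p * l then y (j + i div p) $ (i mod p)
               else u (j + (i - p * l) div m) $ ((i - p * l) mod m))"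

(* Delta_10: columns (dy(j+l), dy(j),...,dy(j+l-1), du(j),...,du(j+l-1)) *)
definition noise_mat :: "nat \<Rightarrow> nat \<Rightarrow> nat \<Rightarrow> nat \<Rightarrow> (nat \<Rightarrow> real vec) \<Rightarrow> (nat \<Rightarrow> real vec) \<Rightarrow> real mat" where
  "noise_mat p m l T dy du = mat (p + p * l + m * l) (T - l + 1)
     (\<lambda>(i, j). if i < p then dy (j + l) $ i
               else data_mat p m l T dy du $$ (i - p, j))"

definition block22 :: "nat \<Rightarrow> real mat \<Rightarrow> real mat" where
  "block22 p Th = mat (dim_row Th - p) (dim_col Th - p) (\<lambda>(i, j). Th $$ (i + p, j + p))"

end

theory Submission
  imports Defs
begin

context vec_space begin

lemma mult_mat_vec_in_span:
  assumes M: "M \<in> carrier_mat n k" and v: "v \<in> carrier_vec k"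
  shows "M *\<^sub>v v \<in> span (set (cols M))"
proof -
  have sub: "set (cols M) \<subseteq> carrier_vec n" using M cols_dim by blast
  have eq: "M *\<^sub>v v = sumlist (map (\<lambda>c. v $ c \<cdot>\<^sub>v col M c) [0..<k])"
  proof (rule eq_vecI)
    fix i assume "i < dim_vec (sumlist (map (\<lambda>c. v $ c \<cdot>\<^sub>v col M c) [0..<k]))"
    hence i: "i < n" using M by (subst (asm) sumlist_dim) auto
    have "sumlist (map (\<lambda>c. v $ c \<cdot>\<^sub>v col M c) [0..<k]) $ i
       = sum_list (map (\<lambda>c. (v $ c \<cdot>\<^sub>v col M c) $ i) [0..<k])"
      by (subst sumlist_vec_index[OF _ i], insert M, auto simp: o_def)
    also have "\<dots> = (\<Sum>c<k. v $ c * M $$ (i, c))"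
      using M i by (simp add: sum_list_map_eq_sum_count atLeast0LessThan[symmetric] sum_set_upt_conv_sum_list_nat[symmetric])
    also have "\<dots> = (M *\<^sub>v v) $ i" using M v i
      by (auto simp: mult_mat_vec_def scalar_prod_def lessThan_atLeast0 mult.commute intro: sum.cong)
    finally show "(M *\<^sub>v v) $ i = sumlist (map (\<lambda>c. v $ c \<cdot>\<^sub>v col M c) [0..<k]) $ i" by simp
  next
    show "dim_vec (M *\<^sub>v v) = dim_vec (sumlist (map (\<lambda>c. v $ c \<cdot>\<^sub>v col M c) [0..<k]))"
      using M by (subst sumlist_dim) auto
  qed
  show ?thesis unfolding eq
  proof (rule sumlist_in_span[OF sub])
    fix x assume "x \<in> set (map (\<lambda>c. v $ c \<cdot>\<^sub>v col M c) [0..<k])"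
    then obtain c where c: "c < k" "x = v $ c \<cdot>\<^sub>v col M c" by auto
    have "col M c \<in> set (cols M)" using M c by (auto simp: cols_def)
    hence "col M c \<in> span (set (cols M))" using span_mem[OF sub] by auto
    thus "x \<in> span (set (cols M))" unfolding c(2) using M c
      by (intro prod_in_span[OF _ sub]) auto
  qed
qed

lemma rank_mult_le:
  assumes M: "M \<in> carrier_mat n k" and N: "N \<in> carrier_mat k c"
  shows "rank (M * N) \<le> rank M"
proof -
  define W where "W = span (set (cols M))"
  have sub: "set (cols M) \<subseteq> carrier_vec n" using M cols_dim by blast
  have MN: "M * N \<in> carrier_mat n c" using M N by auto
  have "set (cols (M * N)) \<subseteq> W"
  proof
    fix x assume "x \<in> set (cols (M * N))"
    then obtain j where j: "j < c" "x = col (M * N) j" using MN by (auto simp: in_set_conv_nth)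
    hence "x = M *\<^sub>v col N j" using M N by auto
    thus "x \<in> W" unfolding W_def using mult_mat_vec_in_span[OF M] N j by auto
  qed
  have WV: "subspace class_ring W V" unfolding W_def using sub span_is_subspace by auto
  then have "span (set (cols (M * N))) \<subseteq> W"
    by (simp add: \<open>set (cols (M * N)) \<subseteq> W\<close> span_is_subset)
  have "subspace class_ring (span (set (cols (M * N)))) V"
    using MN cols_dim span_is_subspace by (metis carrier_matD(1))
  have subspace: "subspace class_ring (span (set (cols (M * N)))) (vs W)"
    by (rule nested_subspaces[OF WV]) fact+
  have fdW: "vectorspace.fin_dim class_ring (vs W)" unfolding W_def using fin_dim_span_cols[OF M] .
  have "vectorspace.fin_dim class_ring (span_vs (set (cols (M * N))))" using fin_dim_span_cols[OF MN] .
  then show ?thesis unfolding rank_def W_def[symmetric]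
    using vectorspace.subspace_dim[OF subspace_is_vs[OF WV] subspace fdW] by auto
qed

lemma rank_le_nr:
  assumes M: "M \<in> carrier_mat n k"
  shows "rank M \<le> n"
proof -
  have sub: "set (cols M) \<subseteq> carrier_vec n" using M cols_dim by blast
  have S: "subspace class_ring (span (set (cols M))) V" using sub span_is_subspace by auto
  show ?thesis unfolding rank_def using subspace_dim[OF S fin_dim fin_dim_span_cols[OF M]] dim_is_n by simp
qed

end

lemma sum_split_add: "(\<Sum>c\<in>{0..<a+b}. f c) = (\<Sum>c\<in>{0..<a}. f c) + (\<Sum>c\<in>{0..<b}. f (a + c :: nat))"
  by (induct b) (auto simp: add.assoc)

lemma pow_mat_comm: assumes A: "A \<in> carrier_mat n n"
  shows "A * A ^\<^sub>m q = A ^\<^sub>m q * A"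
proof (induct q)
  case 0 then show ?case using A by simp
next
  case (Suc q)
  have "A * A ^\<^sub>m Suc q = (A * A ^\<^sub>m q) * A" using A by (simp add: assoc_mult_mat[symmetric, of A n n _ n])
  also have "\<dots> = A ^\<^sub>m Suc q * A" using Suc by simp
  finally show ?case .
qed

definition Emat :: "nat \<Rightarrow> nat \<Rightarrow> nat \<Rightarrow> real mat" where
  "Emat m l q = mat m (m * l) (\<lambda>(s, c). if c = q * m + s then 1 else 0)"

primrec Kseq :: "real mat \<Rightarrow> real mat \<Rightarrow> nat \<Rightarrow> nat \<Rightarrow> nat \<Rightarrow> nat \<Rightarrow> real mat" where
  "Kseq A B n m l 0 = 0\<^sub>m n (m * l)"
| "Kseq A B n m l (Suc q) = A * Kseq A B n m l q + B * Emat m l q"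

definition Ucol :: "(nat \<Rightarrow> real vec) \<Rightarrow> nat \<Rightarrow> nat \<Rightarrow> nat \<Rightarrow> real vec" where
  "Ucol u m l j = vec (m * l) (\<lambda>c. u (j + c div m) $ (c mod m))"

lemma Kseq_carrier: "A \<in> carrier_mat n n \<Longrightarrow> B \<in> carrier_mat n m \<Longrightarrow> Kseq A B n m l q \<in> carrier_mat n (m * l)"
  by (induct q) (auto simp: Emat_def)

lemma qm_bound: "q < (l::nat) \<Longrightarrow> s < m \<Longrightarrow> q * m + s < m * l"
proof -
  assume "q < l" "s < m"
  hence "q * m + s < q * m + m" by simp
  also have "\<dots> = Suc q * m" by simp
  also have "\<dots> \<le> l * m" using \<open>q < l\<close> by (intro mult_le_mono1) simp
  finally show ?thesis by (simp add: mult.commute)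
qed

lemma Emat_Ucol: assumes q: "q < l" and u: "u (j + q) \<in> carrier_vec m"
  shows "Emat m l q *\<^sub>v Ucol u m l j = u (j + q)"
proof (rule eq_vecI)
  show "dim_vec (Emat m l q *\<^sub>v Ucol u m l j) = dim_vec (u (j + q))" using u by (simp add: Emat_def)
  fix s assume "s < dim_vec (u (j + q))"
  hence s: "s < m" using u by simp
  have b: "q * m + s < m * l" using qm_bound[OF q s] .
  have "(Emat m l q *\<^sub>v Ucol u m l j) $ s = (\<Sum>c\<in>{0..<m*l}. (if c = q * m + s then 1 else 0) * Ucol u m l j $ c)"
    using s by (simp add: Emat_def mult_mat_vec_def scalar_prod_def Ucol_def)
  also have "\<dots> = (\<Sum>c\<in>{0..<m*l}. (if c = q * m + s then Ucol u m l j $ c else 0))"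
    by (rule sum.cong) auto
  also have "\<dots> = Ucol u m l j $ (q * m + s)" using b by simp
  also have "\<dots> = u (j + q) $ s" using b s by (simp add: Ucol_def)
  finally show "(Emat m l q *\<^sub>v Ucol u m l j) $ s = u (j + q) $ s" .
qed

lemma state_formula:
  assumes A: "A \<in> carrier_mat n n" and B: "B \<in> carrier_mat n m"
    and x_dim: "\<And>k. k \<le> T + 1 \<Longrightarrow> x k \<in> carrier_vec n"
    and u_dim: "\<And>k. k \<le> T \<Longrightarrow> u k \<in> carrier_vec m"
    and dyn: "\<And>k. k \<le> T \<Longrightarrow> x (k + 1) = A *\<^sub>v x k + B *\<^sub>v u k"
    and jl: "j + l \<le> T"
  shows "q \<le> l \<Longrightarrow> x (j + q) = A ^\<^sub>m q *\<^sub>v x j + Kseq A B n m l q *\<^sub>v Ucol u m l j"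
proof (induct q)
  case 0
  have xj: "x j \<in> carrier_vec n" using x_dim jl by auto
  have z: "0\<^sub>m n (m * l) *\<^sub>v Ucol u m l j = 0\<^sub>v n"
    by (rule eq_vecI) (auto simp: Ucol_def)
  show ?case using xj A by (simp add: z)
next
  case (Suc q)
  have ql: "q < l" using Suc by simp
  have xj: "x j \<in> carrier_vec n" using x_dim jl by auto
  have U: "Ucol u m l j \<in> carrier_vec (m * l)" by (simp add: Ucol_def)
  have K: "Kseq A B n m l q \<in> carrier_mat n (m * l)" using Kseq_carrier[OF A B] .
  have E: "Emat m l q \<in> carrier_mat m (m * l)" by (simp add: Emat_def)
  have uq: "u (j + q) \<in> carrier_vec m" using u_dim jl ql by auto
  have "x (j + Suc q) = A *\<^sub>v x (j + q) + B *\<^sub>v u (j + q)" using dyn[of "j + q"] jl ql by simp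
  also have "\<dots> = A *\<^sub>v (A ^\<^sub>m q *\<^sub>v x j + Kseq A B n m l q *\<^sub>v Ucol u m l j) + B *\<^sub>v (Emat m l q *\<^sub>v Ucol u m l j)"
    using Suc ql Emat_Ucol[of q l u j m, OF ql uq] by simp
  also have "\<dots> = (A * A ^\<^sub>m q) *\<^sub>v x j + (A * Kseq A B n m l q + B * Emat m l q) *\<^sub>v Ucol u m l j"
  proof -
    have P: "A ^\<^sub>m q *\<^sub>v x j \<in> carrier_vec n" using pow_carrier_mat[OF A, of q] xj by auto
    have Q: "Kseq A B n m l q *\<^sub>v Ucol u m l j \<in> carrier_vec n" using K U by simp
    have e1: "A *\<^sub>v (A ^\<^sub>m q *\<^sub>v x j + Kseq A B n m l q *\<^sub>v Ucol u m l j)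
      = A *\<^sub>v (A ^\<^sub>m q *\<^sub>v x j) + A *\<^sub>v (Kseq A B n m l q *\<^sub>v Ucol u m l j)"
      using mult_add_distrib_mat_vec[OF A P Q] .
    have e2: "(A * A ^\<^sub>m q) *\<^sub>v x j = A *\<^sub>v (A ^\<^sub>m q *\<^sub>v x j)" using assoc_mult_mat_vec[OF A pow_carrier_mat[OF A, of q] xj] .
    have e3: "(A * Kseq A B n m l q + B * Emat m l q) *\<^sub>v Ucol u m l j
      = A *\<^sub>v (Kseq A B n m l q *\<^sub>v Ucol u m l j) + B *\<^sub>v (Emat m l q *\<^sub>v Ucol u m l j)"
      using add_mult_distrib_mat_vec[of "A * Kseq A B n m l q" n "m*l" "B * Emat m l q" "Ucol u m l j"] A B K E U
      by simp
    have c: "A *\<^sub>v (Kseq A B n m l q *\<^sub>v Ucol u m l j) \<in> carrier_vec n"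
         "B *\<^sub>v (Emat m l q *\<^sub>v Ucol u m l j) \<in> carrier_vec n"
         "A *\<^sub>v (A ^\<^sub>m q *\<^sub>v x j) \<in> carrier_vec n" using A B K E U xj P by auto
    show ?thesis unfolding e1 e2 e3 using assoc_add_vec[OF c(3) c(1) c(2)] by simp
  qed
  also have "\<dots> = A ^\<^sub>m Suc q *\<^sub>v x j + Kseq A B n m l (Suc q) *\<^sub>v Ucol u m l j"
    using pow_mat_comm[OF A] by simp
  finally show ?case .
qed

definition Mfac :: "real mat \<Rightarrow> real mat \<Rightarrow> real mat \<Rightarrow> nat \<Rightarrow> nat \<Rightarrow> nat \<Rightarrow> nat \<Rightarrow> real mat" where
  "Mfac A B C n m p l = mat (p * l + m * l) (n + m * l) (\<lambda>(i, c).
     if i < p * l then (if c < n then (C * A ^\<^sub>m (i div p)) $$ (i mod p, c)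
                        else (C * Kseq A B n m l (i div p)) $$ (i mod p, c - n))
     else (if c = n + (i - p * l) then 1 else 0))"

definition Nfac :: "(nat \<Rightarrow> real vec) \<Rightarrow> (nat \<Rightarrow> real vec) \<Rightarrow> nat \<Rightarrow> nat \<Rightarrow> nat \<Rightarrow> nat \<Rightarrow> real mat" where
  "Nfac x u n m l T = mat (n + m * l) (T - l + 1) (\<lambda>(c, j).
     if c < n then x j $ c else u (j + (c - n) div m) $ ((c - n) mod m))"

lemma factorization:
  assumes A: "A \<in> carrier_mat n n" and B: "B \<in> carrier_mat n m" and C: "C \<in> carrier_mat p n"
    and lT: "l \<le> T"
    and x_dim: "\<And>k. k \<le> T + 1 \<Longrightarrow> x k \<in> carrier_vec n"
    and u_dim: "\<And>k. k \<le> T \<Longrightarrow> u k \<in> carrier_vec m"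
    and dyn: "\<And>k. k \<le> T \<Longrightarrow> x (k + 1) = A *\<^sub>v x k + B *\<^sub>v u k"
    and out: "\<And>k. k \<le> T \<Longrightarrow> y k = C *\<^sub>v x k"
  shows "data_mat p m l T y u = Mfac A B C n m p l * Nfac x u n m l T"
proof (rule eq_matI)
  show "dim_row (data_mat p m l T y u) = dim_row (Mfac A B C n m p l * Nfac x u n m l T)"
    by (simp add: data_mat_def Mfac_def)
  show "dim_col (data_mat p m l T y u) = dim_col (Mfac A B C n m p l * Nfac x u n m l T)"
    by (simp add: data_mat_def Nfac_def)
  fix i j assume "i < dim_row (Mfac A B C n m p l * Nfac x u n m l T)"
    "j < dim_col (Mfac A B C n m p l * Nfac x u n m l T)"
  hence i: "i < p * l + m * l" and j: "j < T - l + 1" by (auto simp: Mfac_def Nfac_def)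
  have jl: "j + l \<le> T" using j lT by simp
  let ?M = "Mfac A B C n m p l" and ?N = "Nfac x u n m l T"
  have prod: "(?M * ?N) $$ (i, j) = (\<Sum>c\<in>{0..<n + m * l}. ?M $$ (i, c) * ?N $$ (c, j))"
    using i j by (simp add: scalar_prod_def Mfac_def Nfac_def)
  also have "\<dots> = (\<Sum>c\<in>{0..<n}. ?M $$ (i, c) * ?N $$ (c, j))
      + (\<Sum>c\<in>{0..<m * l}. ?M $$ (i, n + c) * ?N $$ (n + c, j))"
    by (rule sum_split_add)
  finally have split: "(?M * ?N) $$ (i, j) = \<dots>" .
  have U: "Ucol u m l j \<in> carrier_vec (m * l)" by (simp add: Ucol_def)
  show "data_mat p m l T y u $$ (i, j) = (?M * ?N) $$ (i, j)"
  proof (cases "i < p * l")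
    case True
    define q where "q = i div p"
    define r where "r = i mod p"
    have pp: "p > 0" using True by (cases p) auto
    have q: "q < l" using True pp unfolding q_def by (simp add: div_less_iff_less_mult mult.commute)
    have r: "r < p" using pp unfolding r_def by simp
    have xj: "x j \<in> carrier_vec n" using x_dim jl by auto
    have K: "Kseq A B n m l q \<in> carrier_mat n (m * l)" using Kseq_carrier[OF A B] .
    have CA: "C * A ^\<^sub>m q \<in> carrier_mat p n" using C A by simp
    have CK: "C * Kseq A B n m l q \<in> carrier_mat p (m * l)" using C K by simp
    have s1: "(\<Sum>c\<in>{0..<n}. ?M $$ (i, c) * ?N $$ (c, j)) = ((C * A ^\<^sub>m q) *\<^sub>v x j) $ r"
      using True i j CA C A r xj by (simp add: carrier_matD Mfac_def Nfac_def q_def r_def mult_mat_vec_def scalar_prod_def)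
    have s2: "(\<Sum>c\<in>{0..<m * l}. ?M $$ (i, n + c) * ?N $$ (n + c, j)) = ((C * Kseq A B n m l q) *\<^sub>v Ucol u m l j) $ r"
      using True i j CK C K r U by (simp add: carrier_matD Mfac_def Nfac_def q_def r_def mult_mat_vec_def scalar_prod_def Ucol_def)
    have "y (j + q) = C *\<^sub>v x (j + q)" using out jl q by simp
    also have "\<dots> = C *\<^sub>v (A ^\<^sub>m q *\<^sub>v x j + Kseq A B n m l q *\<^sub>v Ucol u m l j)"
      using state_formula[of A n B m T x u j l q, OF A B x_dim u_dim dyn jl] q by simp
    also have "\<dots> = (C * A ^\<^sub>m q) *\<^sub>v x j + (C * Kseq A B n m l q) *\<^sub>v Ucol u m l j"
      using mult_add_distrib_mat_vec[OF C, of "A ^\<^sub>m q *\<^sub>v x j" "Kseq A B n m l q *\<^sub>v Ucol u m l j"]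
        assoc_mult_mat_vec[OF C pow_carrier_mat[OF A, of q] xj] assoc_mult_mat_vec[OF C K U]
        pow_carrier_mat[OF A, of q] xj K U by simp
    finally have "y (j + q) $ r = ((C * A ^\<^sub>m q) *\<^sub>v x j) $ r + ((C * Kseq A B n m l q) *\<^sub>v Ucol u m l j) $ r"
      using r CA CK C xj U by simp
    then show ?thesis unfolding split s1 s2 using True i j by (simp add: data_mat_def q_def r_def)
  next
    case False
    define i' where "i' = i - p * l"
    have i': "i' < m * l" using i False unfolding i'_def by simp
    have s1: "(\<Sum>c\<in>{0..<n}. ?M $$ (i, c) * ?N $$ (c, j)) = 0"
      using False i j by (intro sum.neutral) (auto simp: Mfac_def Nfac_def)
    have "(\<Sum>c\<in>{0..<m * l}. ?M $$ (i, n + c) * ?N $$ (n + c, j))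
       = (\<Sum>c\<in>{0..<m * l}. if c = i' then ?N $$ (n + c, j) else 0)"
      using False i j by (intro sum.cong) (auto simp: Mfac_def i'_def)
    also have "\<dots> = ?N $$ (n + i', j)" using i' by simp
    also have "\<dots> = u (j + i' div m) $ (i' mod m)" using i' j by (simp add: Nfac_def)
    finally show ?thesis unfolding split s1 using False i j by (simp add: data_mat_def i'_def)
  qed
qed

lemma rank_data_le:
  assumes A: "A \<in> carrier_mat n n" and B: "B \<in> carrier_mat n m" and C: "C \<in> carrier_mat p n"
    and lT: "l \<le> T"
    and x_dim: "\<And>k. k \<le> T + 1 \<Longrightarrow> x k \<in> carrier_vec n"
    and u_dim: "\<And>k. k \<le> T \<Longrightarrow> u k \<in> carrier_vec m"
    and dyn: "\<And>k. k \<le> T \<Longrightarrow> x (k + 1) = A *\<^sub>v x k + B *\<^sub>v u k"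
    and out: "\<And>k. k \<le> T \<Longrightarrow> y k = C *\<^sub>v x k"
  shows "mrank (data_mat p m l T y u) \<le> n + m * l"
proof -
  have M: "Mfac A B C n m p l \<in> carrier_mat (p * l + m * l) (n + m * l)" by (simp add: Mfac_def)
  have N: "Nfac x u n m l T \<in> carrier_mat (n + m * l) (T - l + 1)" by (simp add: Nfac_def)
  have "mrank (data_mat p m l T y u) = vec_space.rank (p * l + m * l) (Mfac A B C n m p l * Nfac x u n m l T)"
  proof -
    have F: "data_mat p m l T y u = Mfac A B C n m p l * Nfac x u n m l T"
      by (rule factorization[of A n B m C p l T x u y, OF assms])
    have D: "dim_row (data_mat p m l T y u) = p * l + m * l" by (simp add: data_mat_def)
    show ?thesis unfolding mrank_def D unfolding F ..
  qed
  also have "\<dots> \<le> vec_space.rank (p * l + m * l) (Mfac A B C n m p l)"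
    by (rule vec_space.rank_mult_le[OF M N])
  also have "\<dots> \<le> n + m * l" by (rule vec_space.rank_le_nc[OF M])
  finally show ?thesis .
qed

lemma self_sprod_zero: fixes w :: "real vec"
  assumes w: "w \<in> carrier_vec k" and z: "w \<bullet> w = 0" shows "w = 0\<^sub>v k"
proof (rule eq_vecI)
  have "(\<Sum>i\<in>{0..<k}. w $ i * w $ i) = 0" using z w by (simp add: scalar_prod_def)
  hence "\<forall>i\<in>{0..<k}. w $ i * w $ i = 0" by (subst (asm) sum_nonneg_eq_0_iff) auto
  thus "\<And>i. i < dim_vec (0\<^sub>v k) \<Longrightarrow> w $ i = 0\<^sub>v k $ i" by auto
  show "dim_vec w = dim_vec (0\<^sub>v k)" using w by simp
qed

lemma quad_gram: fixes M :: "real mat"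
  assumes M: "M \<in> carrier_mat r k" and v: "v \<in> carrier_vec r"
  shows "v \<bullet> ((M * transpose_mat M) *\<^sub>v v) = (transpose_mat M *\<^sub>v v) \<bullet> (transpose_mat M *\<^sub>v v)"
proof -
  have Mt: "transpose_mat M \<in> carrier_mat k r" using M by simp
  have "(M * transpose_mat M) *\<^sub>v v = M *\<^sub>v (transpose_mat M *\<^sub>v v)" using M Mt v by simp
  moreover have "(transpose_mat M *\<^sub>v v) \<bullet> (transpose_mat M *\<^sub>v v) = v \<bullet> (M *\<^sub>v (transpose_mat M *\<^sub>v v))"
    by (rule transpose_vec_mult_scalar[OF M _ v]) (use Mt v in auto)
  ultimately show ?thesis by simp
qed

lemma part1_abstract: fixes S D Q :: "real mat"
  assumes S: "S \<in> carrier_mat r k" and D: "D \<in> carrier_mat r k" and Q: "Q \<in> carrier_mat r r"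
    and hD: "\<And>v. v \<in> carrier_vec r \<Longrightarrow> v \<bullet> ((D * transpose_mat D) *\<^sub>v v) \<le> v \<bullet> (Q *\<^sub>v v)"
    and hpd: "pd ((S + D) * transpose_mat (S + D) - Q)"
  shows "vec_space.rank r S = r"
proof -
  have St: "transpose_mat S \<in> carrier_mat k r" and Dt: "transpose_mat D \<in> carrier_mat k r" using S D by auto
  have nz: "transpose_mat S *\<^sub>v v \<noteq> 0\<^sub>v k" if v: "v \<in> carrier_vec r" "v \<noteq> 0\<^sub>v r" for v
  proof
    assume Sv: "transpose_mat S *\<^sub>v v = 0\<^sub>v k"
    have SD: "S + D \<in> carrier_mat r k" using S D by simp
    let ?P = "(S + D) * transpose_mat (S + D)"
    have P: "?P \<in> carrier_mat r r" using SD by simp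
    have dimPQ: "dim_row (?P - Q) = r" using Q by simp
    have "v \<bullet> ((?P - Q) *\<^sub>v v) > 0" using hpd v dimPQ unfolding pd_def by auto
    moreover have "(?P - Q) *\<^sub>v v = ?P *\<^sub>v v - Q *\<^sub>v v" using minus_mult_distrib_mat_vec[OF P Q v(1)] .
    moreover have "v \<bullet> (?P *\<^sub>v v - Q *\<^sub>v v) = v \<bullet> (?P *\<^sub>v v) - v \<bullet> (Q *\<^sub>v v)"
      by (rule scalar_prod_minus_distrib[OF v(1)]) (use P Q v in auto)
    moreover have "transpose_mat (S + D) *\<^sub>v v = transpose_mat D *\<^sub>v v"
    proof -
      have "transpose_mat (S + D) = transpose_mat S + transpose_mat D" using transpose_add[OF S D] .
      hence "transpose_mat (S + D) *\<^sub>v v = transpose_mat S *\<^sub>v v + transpose_mat D *\<^sub>v v"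
        using add_mult_distrib_mat_vec[OF St Dt v(1)] by simp
      thus ?thesis using Sv Dt v by simp
    qed
    moreover have "v \<bullet> (?P *\<^sub>v v) = (transpose_mat (S + D) *\<^sub>v v) \<bullet> (transpose_mat (S + D) *\<^sub>v v)"
      by (rule quad_gram[OF SD v(1)])
    moreover have "v \<bullet> ((D * transpose_mat D) *\<^sub>v v) = (transpose_mat D *\<^sub>v v) \<bullet> (transpose_mat D *\<^sub>v v)"
      by (rule quad_gram[OF D v(1)])
    ultimately show False using hD[OF v(1)] by simp
  qed
  define G where "G = S * transpose_mat S"
  have G: "G \<in> carrier_mat r r" unfolding G_def using S by simp
  have "det G \<noteq> 0"
  proof
    assume "det G = 0"
    then obtain v where v: "v \<in> carrier_vec r" "v \<noteq> 0\<^sub>v r" "G *\<^sub>v v = 0\<^sub>v r"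
      using det_0_iff_vec_prod_zero_field[OF G] by blast
    have "(transpose_mat S *\<^sub>v v) \<bullet> (transpose_mat S *\<^sub>v v) = v \<bullet> (G *\<^sub>v v)"
      unfolding G_def by (rule quad_gram[OF S v(1), symmetric])
    also have "\<dots> = 0" using v by simp
    finally have "transpose_mat S *\<^sub>v v = 0\<^sub>v k" using St v by (intro self_sprod_zero) auto
    with nz[OF v(1,2)] show False by simp
  qed
  hence "vec_space.rank r G = r" using vec_space.det_rank_iff[OF G] by simp
  moreover have "vec_space.rank r G \<le> vec_space.rank r S" unfolding G_def by (rule vec_space.rank_mult_le[OF S St])
  moreover have "vec_space.rank r S \<le> r" by (rule vec_space.rank_le_nr[OF S])
  ultimately show ?thesis by simp
qed

lemma block_quad: fixes X :: "real mat"
  assumes X: "X \<in> carrier_mat (p + r) (p + r)" and v: "v \<in> carrier_vec r"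
  shows "(0\<^sub>v p @\<^sub>v v) \<bullet> (X *\<^sub>v (0\<^sub>v p @\<^sub>v v)) = v \<bullet> (block22 p X *\<^sub>v v)"
proof -
  let ?w = "0\<^sub>v p @\<^sub>v v"
  have w: "?w \<in> carrier_vec (p + r)" using v by simp
  have Xw: "(X *\<^sub>v ?w) $ (p + i) = (\<Sum>c\<in>{0..<r}. X $$ (p + i, p + c) * v $ c)" if i: "i < r" for i
  proof -
    have "(X *\<^sub>v ?w) $ (p + i) = (\<Sum>c\<in>{0..<p + r}. X $$ (p + i, c) * ?w $ c)"
      using X w v i by (auto simp: mult_mat_vec_def scalar_prod_def intro!: sum.cong)
    also have "\<dots> = (\<Sum>c\<in>{0..<p}. X $$ (p + i, c) * ?w $ c) + (\<Sum>c\<in>{0..<r}. X $$ (p + i, p + c) * ?w $ (p + c))"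
      by (rule sum_split_add)
    also have "(\<Sum>c\<in>{0..<p}. X $$ (p + i, c) * ?w $ c) = 0" using v by (intro sum.neutral) auto
    also have "(\<Sum>c\<in>{0..<r}. X $$ (p + i, p + c) * ?w $ (p + c)) = (\<Sum>c\<in>{0..<r}. X $$ (p + i, p + c) * v $ c)"
      using v by (intro sum.cong) auto
    finally show ?thesis by simp
  qed
  have "?w \<bullet> (X *\<^sub>v ?w) = (\<Sum>i\<in>{0..<p + r}. ?w $ i * (X *\<^sub>v ?w) $ i)"
    using X w by (simp add: scalar_prod_def)
  also have "\<dots> = (\<Sum>i\<in>{0..<p}. ?w $ i * (X *\<^sub>v ?w) $ i) + (\<Sum>i\<in>{0..<r}. ?w $ (p + i) * (X *\<^sub>v ?w) $ (p + i))"
    by (rule sum_split_add)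
  also have "(\<Sum>i\<in>{0..<p}. ?w $ i * (X *\<^sub>v ?w) $ i) = 0" using v by (intro sum.neutral) auto
  also have "(\<Sum>i\<in>{0..<r}. ?w $ (p + i) * (X *\<^sub>v ?w) $ (p + i))
     = (\<Sum>i\<in>{0..<r}. v $ i * (\<Sum>c\<in>{0..<r}. X $$ (p + i, p + c) * v $ c))"
    using v Xw by (intro sum.cong) auto
  also have "\<dots> = v \<bullet> (block22 p X *\<^sub>v v)"
    using X v by (simp add: scalar_prod_def mult_mat_vec_def block22_def add.commute)
  finally show ?thesis by simp
qed

lemma block22_diff:
  assumes Th: "Th \<in> carrier_mat (p + (p * l + m * l)) (p + (p * l + m * l))"
  shows "block22 p (Th - noise_mat p m l T dy du * transpose_mat (noise_mat p m l T dy du))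
       = block22 p Th - data_mat p m l T dy du * transpose_mat (data_mat p m l T dy du)"
proof (rule eq_matI)
  fix i j assume "i < dim_row (block22 p Th - data_mat p m l T dy du * transpose_mat (data_mat p m l T dy du))"
    "j < dim_col (block22 p Th - data_mat p m l T dy du * transpose_mat (data_mat p m l T dy du))"
  hence i: "i < p * l + m * l" and j: "j < p * l + m * l" by (auto simp: data_mat_def)
  have r: "row (noise_mat p m l T dy du) (i + p) = row (data_mat p m l T dy du) i"
       "row (noise_mat p m l T dy du) (j + p) = row (data_mat p m l T dy du) j"
    using i j by (auto simp: noise_mat_def data_mat_def)
  show "block22 p (Th - noise_mat p m l T dy du * transpose_mat (noise_mat p m l T dy du)) $$ (i, j) =
    (block22 p Th - data_mat p m l T dy du * transpose_mat (data_mat p m l T dy du)) $$ (i, j)"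
    using i j Th r by (simp add: block22_def noise_mat_def data_mat_def)
qed (use Th in \<open>auto simp: block22_def data_mat_def noise_mat_def\<close>)

lemma psi_split:
  assumes lT: "l \<le> T"
    and du_dim: "\<And>k. k \<le> T \<Longrightarrow> du k \<in> carrier_vec m"
    and dy_dim: "\<And>k. k \<le> T \<Longrightarrow> dy k \<in> carrier_vec p"
  shows "data_mat p m l T (\<lambda>k. y k + dy k) (\<lambda>k. u k + du k) = data_mat p m l T y u + data_mat p m l T dy du"
proof (rule eq_matI)
  fix i j assume "i < dim_row (data_mat p m l T y u + data_mat p m l T dy du)"
    "j < dim_col (data_mat p m l T y u + data_mat p m l T dy du)"
  hence i: "i < p * l + m * l" and j: "j < T - l + 1" by (auto simp: data_mat_def)
  show "data_mat p m l T (\<lambda>k. y k + dy k) (\<lambda>k. u k + du k) $$ (i, j) =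
    (data_mat p m l T y u + data_mat p m l T dy du) $$ (i, j)"
  proof (cases "i < p * l")
    case True
    have pp: "p > 0" using True by (cases p) auto
    have q: "i div p < l" using True pp by (simp add: div_less_iff_less_mult mult.commute)
    have k: "j + i div p \<le> T" using q j lT by simp
    have "dy (j + i div p) \<in> carrier_vec p" using dy_dim k .
    then show ?thesis using True i j pp by (simp add: data_mat_def)
  next
    case False
    define i' where "i' = i - p * l"
    have i': "i' < m * l" using i False unfolding i'_def by simp
    have mm: "m > 0" using i' by (cases m) auto
    have q: "i' div m < l" using i' mm by (simp add: div_less_iff_less_mult mult.commute)
    have k: "j + i' div m \<le> T" using q j lT by simp
    have "du (j + i' div m) \<in> carrier_vec m" using du_dim k .
    then show ?thesis using False i j mm by (simp add: data_mat_def i'_def)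
  qed
qed (auto simp: data_mat_def)

theorem lemma9:
  fixes A B C Th :: "real mat" and n m p T :: nat
    and x u y du dy :: "nat \<Rightarrow> real vec"
  assumes A: "A \<in> carrier_mat n n" and B: "B \<in> carrier_mat n m" and C: "C \<in> carrier_mat p n"
    and obs: "observable A C"
    and T: "T \<ge> obs_index A C"
    and x_dim: "\<And>k. k \<le> T + 1 \<Longrightarrow> x k \<in> carrier_vec n"
    and u_dim: "\<And>k. k \<le> T \<Longrightarrow> u k \<in> carrier_vec m"
    and du_dim: "\<And>k. k \<le> T \<Longrightarrow> du k \<in> carrier_vec m"
    and dy_dim: "\<And>k. k \<le> T \<Longrightarrow> dy k \<in> carrier_vec p"
    and dyn: "\<And>k. k \<le> T \<Longrightarrow> x (k + 1) = A *\<^sub>v x k + B *\<^sub>v u k"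
    and out: "\<And>k. k \<le> T \<Longrightarrow> y k = C *\<^sub>v x k"
    and Th: "Th \<in> carrier_mat (p + p * obs_index A C + m * obs_index A C) (p + p * obs_index A C + m * obs_index A C)"
    and Th_sym: "transpose_mat Th = Th" and Th_psd: "psd Th"
    and noise: "loewner_le (noise_mat p m (obs_index A C) T dy du * transpose_mat (noise_mat p m (obs_index A C) T dy du)) Th"
  shows "(let l = obs_index A C;
              Psi0 = data_mat p m l T (\<lambda>k. y k + dy k) (\<lambda>k. u k + du k);
              S0 = data_mat p m l T y u
          in (loewner_gt (Psi0 * transpose_mat Psi0) (block22 p Th) \<longrightarrow> mrank S0 = (p + m) * l)
           \<and> (mrank S0 = (p + m) * l \<longrightarrow> mrank (obs_mat A C l) = p * l)
           \<and> (mrank (obs_mat A C l) = p * l \<longrightarrow> p * l = n))"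
proof -
  define l where "l = obs_index A C"
  define S0 where "S0 = data_mat p m l T y u"
  define D where "D = data_mat p m l T dy du"
  define Psi0 where "Psi0 = data_mat p m l T (\<lambda>k. y k + dy k) (\<lambda>k. u k + du k)"
  define r where "r = p * l + m * l"
  have lT: "l \<le> T" using T unfolding l_def .
  have dA: "dim_row A = n" using A by simp
  have L: "mrank (obs_mat A C l) = n"
    unfolding l_def obs_index_def using obs unfolding observable_def dA by (rule LeastI)
  have O: "obs_mat A C l \<in> carrier_mat (p * l) n" using A C by (simp add: obs_mat_def)
  have rO: "mrank (obs_mat A C l) \<le> p * l"
    unfolding mrank_def using O vec_space.rank_le_nr[OF O] by simp
  have p3: "mrank (obs_mat A C l) = p * l \<longrightarrow> p * l = n" using L by simp
  have p2: "mrank S0 = (p + m) * l \<longrightarrow> mrank (obs_mat A C l) = p * l"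
  proof
    assume h: "mrank S0 = (p + m) * l"
    have "mrank S0 \<le> n + m * l" unfolding S0_def
      by (rule rank_data_le[of A n B m C p l T x u y, OF A B C lT x_dim u_dim dyn out])
    hence "p * l \<le> n" using h by (simp add: algebra_simps)
    thus "mrank (obs_mat A C l) = p * l" using L rO by simp
  qed
  have p1: "loewner_gt (Psi0 * transpose_mat Psi0) (block22 p Th) \<longrightarrow> mrank S0 = (p + m) * l"
  proof
    assume h: "loewner_gt (Psi0 * transpose_mat Psi0) (block22 p Th)"
    have S: "S0 \<in> carrier_mat r (T - l + 1)" unfolding S0_def r_def by (simp add: data_mat_def)
    have Dc: "D \<in> carrier_mat r (T - l + 1)" unfolding D_def r_def by (simp add: data_mat_def)
    have Th': "Th \<in> carrier_mat (p + r) (p + r)" using Th unfolding r_def l_def by (simp add: add.assoc)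
    have Q: "block22 p Th \<in> carrier_mat r r" using Th' by (simp add: block22_def)
    have Psi: "Psi0 = S0 + D" unfolding Psi0_def S0_def D_def by (rule psi_split[OF lT du_dim dy_dim])
    have hpd: "pd ((S0 + D) * transpose_mat (S0 + D) - block22 p Th)"
      using h unfolding loewner_gt_def Psi by simp
    let ?N = "noise_mat p m l T dy du"
    have hD: "v \<bullet> ((D * transpose_mat D) *\<^sub>v v) \<le> v \<bullet> (block22 p Th *\<^sub>v v)" if v: "v \<in> carrier_vec r" for v
    proof -
      have N: "?N \<in> carrier_mat (p + r) (T - l + 1)" unfolding r_def by (simp add: noise_mat_def add.assoc)
      define X where "X = Th - ?N * transpose_mat ?N"
      have X: "X \<in> carrier_mat (p + r) (p + r)" unfolding X_def using Th' N by (intro minus_carrier_mat) auto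
      have psdX: "psd X" using noise unfolding loewner_le_def X_def l_def by simp
      have w: "0\<^sub>v p @\<^sub>v v \<in> carrier_vec (dim_row X)" using X v by simp
      have "0 \<le> (0\<^sub>v p @\<^sub>v v) \<bullet> (X *\<^sub>v (0\<^sub>v p @\<^sub>v v))" using psdX w unfolding psd_def by blast
      also have "\<dots> = v \<bullet> (block22 p X *\<^sub>v v)" by (rule block_quad[OF X v])
      also have "block22 p X = block22 p Th - D * transpose_mat D"
        unfolding X_def D_def by (rule block22_diff) (use Th' r_def in simp)
      also have "(block22 p Th - D * transpose_mat D) *\<^sub>v v = block22 p Th *\<^sub>v v - (D * transpose_mat D) *\<^sub>v v"
        by (rule minus_mult_distrib_mat_vec[OF Q _ v]) (use Dc in simp)
      also have "v \<bullet> (block22 p Th *\<^sub>v v - (D * transpose_mat D) *\<^sub>v v)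
          = v \<bullet> (block22 p Th *\<^sub>v v) - v \<bullet> ((D * transpose_mat D) *\<^sub>v v)"
        by (rule scalar_prod_minus_distrib[OF v]) (use Q Dc v in auto)
      finally show ?thesis by simp
    qed
    have "vec_space.rank r S0 = r" by (rule part1_abstract[OF S Dc Q hD hpd])
    moreover have "dim_row S0 = r" using S by simp
    ultimately show "mrank S0 = (p + m) * l" unfolding mrank_def r_def by (simp add: algebra_simps)
  qed
  show ?thesis unfolding Let_def l_def[symmetric] S0_def[symmetric] Psi0_def[symmetric]
    using p1 p2 p3 by blast
qed

end
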